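(* Let $a,b,c$ be positive numbers with $a<b<c$, $\lfloor c/b\rfloor\ge2$, $b-a<c_0<a$ and $0\le c_1\le2a-b$, where $c_0=c-\lfloor c/b\rfloor b$ and $c_1=c-c_0-\lfloor(c-c_0)/a\rfloor a$. Suppose $\mathcal S_{a,b,c}\ne\emptyset$ and either $a/b\notin\mathbb Q$, or $a/b=p/q$ and $c\in(b/q)\mathbb Z$ for some coprime positive integers $p,q$. Then $$\Big(\big(\mathcal S_{a,b,c}\cap([0,c_0+a-b)+a\mathbb Z)\big)+\lfloor c/b\rfloor b\Big)\cup\bigcup_{k=0}^{\lfloor c/b\rfloor-1}(\mathcal S_{a,b,c}+kb)=\mathbb R.$$
   Context: For $a,b,c>0$ and $t\in\mathbb R$, $\mathbf M_{a,b,c}(t)=(\chi_{[0,c)}(t-\mu+\lambda))_{\mu\in a\mathbb Z,\lambda\in b\mathbb Z}$ is the infinite matrix with rows indexed by $a\mathbb Z$ and columns by $b\mathbb Z$, acting by $(\mathbf M_{a,b,c}(t)\mathbf x)(\mu)=\sum_{\lambda\in b\mathbb Z}\chi_{[0,c)}(t-\mu+\lambda)\mathbf x(\lambda)$. $\mathcal B_b^0$ is the set of vectors $(\mathbf x(\lambda))_{\lambda\in b\mathbb Z}$ with entries in $\{0,1\}$ and $\mathbf x(0)=1$. $\mathbf 1$ denotes the vector indexed by $a\mathbb Z$ with all entries $1$. $\mathcal S_{a,b,c}=\{t:\mathbf M_{a,b,c}(t)\mathbf x=\mathbf 1\text{ for some }\mathbf x\in\mathcal B_b^0\}$. For $A\subset\mathbb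 R$, $A+r=\{x+r:x\in A\}$ and $A+a\mathbb Z=\{x+ak:x\in A,k\in\mathbb Z\}$. *)

theory Defs
  imports "HOL-Analysis.Analysis"
begin

text \<open>Entry of M_{a,b,c}(t) at row mu = a*m (m :: int) and column lambda = b*n (n :: int).\<close>
definition Mentry :: "real \<Rightarrow> real \<Rightarrow> real \<Rightarrow> real \<Rightarrow> int \<Rightarrow> int \<Rightarrow> real" where
  "Mentry a b c t m n = indicator {0..<c} (t - a * of_int m + b * of_int n)"

text \<open>Only finitely many entries of a row are nonzero (c is finite, b > 0), so
  the sum is the finite sum over the support of the row.\<close>
definition Mmult :: "real \<Rightarrow> real \<Rightarrow> real \<Rightarrow> real \<Rightarrow> (int \<Rightarrow> real) \<Rightarrow> int \<Rightarrow> real" where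
  "Mmult a b c t x m = (\<Sum>n\<in>{n. Mentry a b c t m n \<noteq> 0}. Mentry a b c t m n * x n)"

text \<open>B_b^0: 0/1 vectors indexed by b*Z (index n stands for lambda = b n) with x(0) = 1.\<close>
definition B0 :: "(int \<Rightarrow> real) set" where
  "B0 = {x. (\<forall>n. x n \<in> {0, 1}) \<and> x 0 = 1}"

definition Sabc :: "real \<Rightarrow> real \<Rightarrow> real \<Rightarrow> real set" where
  "Sabc a b c = {t. \<exists>x\<in>B0. \<forall>m. Mmult a b c t x m = 1}"

end

theory Submission
  imports Defs
begin


lemma Mentry_ne0:
  "Mentry a b c t m n \<noteq> 0 \<longleftrightarrow> (0 \<le> t - a * of_int m + b * of_int n \<and> t - a * of_int m + b * of_int n < c)"
  by (simp add: Mentry_def indicator_def)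

lemma Mmult_zero:
  assumes "\<And>n. Mentry a b c t m n \<noteq> 0 \<Longrightarrow> x n = 0"
  shows "Mmult a b c t x m = 0"
  unfolding Mmult_def by (rule sum.neutral) (use assms in auto)

lemma window_contra:
  assumes "x \<in> B0" "\<forall>m. Mmult a b c t x m = 1"
    and "\<And>n. a * of_int m - t \<le> b * of_int n \<Longrightarrow> b * of_int n < a * of_int m - t + c \<Longrightarrow> x n \<noteq> 1"
  shows False
proof -
  have "Mmult a b c t x m = 0"
  proof (rule Mmult_zero)
    fix n assume "Mentry a b c t m n \<noteq> 0"
    hence "a * of_int m - t \<le> b * of_int n" "b * of_int n < a * of_int m - t + c"
      by (auto simp: Mentry_ne0)
    hence "x n \<noteq> 1" using assms(3) by blast
    moreover have "x n \<in> {0,1}" using assms(1) by (auto simp: B0_def)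
    ultimately show "x n = 0" by auto
  qed
  with assms(2) show False by simp
qed

lemma window_contra2:
  assumes "x \<in> B0" "\<forall>m. Mmult a b c t x m = 1" "0 < a" "c + a \<le> \<beta> - \<alpha>"
    and "\<And>n. \<alpha> < b * of_int n \<Longrightarrow> b * of_int n < \<beta> \<Longrightarrow> x n \<noteq> 1"
  shows False
proof -
  define z where "z = (\<beta> - c + t) / a"
  define m where "m = \<lfloor>z\<rfloor>"
  have "of_int m \<le> z" "z < of_int m + 1" unfolding m_def by linarith+
  hence "a * of_int m \<le> a * z" "a * z < a * (of_int m + 1)"
    using assms(3) by (auto intro: mult_left_mono mult_strict_left_mono)
  moreover have "a * z = \<beta> - c + t" unfolding z_def using assms(3) by simp
  ultimately have h1: "a * of_int m - t + c \<le> \<beta>" and h2: "\<alpha> < a * of_int m - t"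
    using assms(4) by (simp_all add: algebra_simps)
  show False
    by (rule window_contra[OF assms(1,2), of m]) (use h1 h2 assms(5) in force)
qed

lemma S_shift_a:
  assumes "t \<in> Sabc a b c" shows "t + a * of_int i \<in> Sabc a b c"
proof -
  have E: "\<And>m n. Mentry a b c (t + a * of_int i) m n = Mentry a b c t (m - i) n"
    by (simp add: Mentry_def algebra_simps)
  have "Mmult a b c (t + a * of_int i) x m = Mmult a b c t x (m - i)" for x m
    by (simp add: Mmult_def E)
  thus ?thesis using assms by (auto simp: Sabc_def)
qed

lemma S_shift_b:
  assumes "x \<in> B0" "\<forall>m. Mmult a b c t x m = 1" "x n0 = 1"
  shows "t + b * of_int n0 \<in> Sabc a b c"
proof -
  define x' where "x' = (\<lambda>n. x (n + n0))"
  have E: "\<And>m n. Mentry a b c (t + b * of_int n0) m n = Mentry a b c t m (n + n0)"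
    by (simp add: Mentry_def algebra_simps)
  have "Mmult a b c (t + b * of_int n0) x' m = Mmult a b c t x m" for m
    unfolding Mmult_def E x'_def
    by (rule sum.reindex_bij_witness[where i="\<lambda>n. n - n0" and j="\<lambda>n. n + n0"]) auto
  moreover have "x' \<in> B0" using assms(1,3) by (auto simp: B0_def x'_def)
  ultimately show ?thesis using assms(2) unfolding Sabc_def by auto
qed

definition PP :: "real \<Rightarrow> real \<Rightarrow> real \<Rightarrow> int \<Rightarrow> real \<Rightarrow> real \<Rightarrow> bool" where
  "PP a b c K d r \<longleftrightarrow> (\<exists>k\<in>{0..<K}. r - of_int k * b \<in> Sabc a b c) \<or>
     (r - of_int K * b \<in> Sabc a b c \<and>
       (\<exists>j::int. 0 \<le> r - of_int K * b - a * of_int j \<and> r - of_int K * b - a * of_int j < d))"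

lemma coset_P:
  assumes ab: "0 < a" "a < b" and c0: "c0 = c - of_int K * b" "c0 < a"
    and tS: "t \<in> Sabc a b c"
  shows "PP a b c K (c0 + a - b) (t + a * of_int i + b * of_int n)"
proof -
  have bpos: "0 < b" using ab by simp
  have iff: "\<And>u v. b * of_int u < b * of_int v \<longleftrightarrow> u < v" using bpos by simp
  define t1 where "t1 = t + a * of_int i"
  have "t1 \<in> Sabc a b c" unfolding t1_def by (rule S_shift_a[OF tS])
  then obtain x where xB: "x \<in> B0" and rows: "\<forall>m. Mmult a b c t1 x m = 1"
    by (auto simp: Sabc_def)
  define r where "r = t1 + b * of_int n"
  have x01: "\<And>n. x n \<in> {0,1}" using xB by (auto simp: B0_def)
  have rdef: "t + a * of_int i + b * of_int n = r" by (simp add: r_def t1_def)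
  show ?thesis
  proof (cases "\<exists>k\<in>{0..<K}. x (n - k) = 1")
    case True
    then obtain k where k: "k \<in> {0..<K}" "x (n - k) = 1" by blast
    have "t1 + b * of_int (n - k) \<in> Sabc a b c" by (rule S_shift_b[OF xB rows k(2)])
    moreover have "t1 + b * of_int (n - k) = r - of_int k * b" by (simp add: r_def algebra_simps)
    ultimately show ?thesis using k unfolding PP_def rdef by auto
  next
    case False
    have zero: "x n' \<noteq> 1" if "n - K < n'" "n' \<le> n" for n'
    proof -
      have "n - n' \<in> {0..<K}" using that by auto
      with False have "x (n - (n - n')) \<noteq> 1" by blast
      thus ?thesis by simp
    qed
    have hi: "x (n + 1) = 1"
    proof (rule ccontr)
      assume h: "x (n + 1) \<noteq> 1"
      show False
      proof (rule window_contra2[OF xB rows ab(1), where \<alpha>="b * of_int (n - K)" and \<beta>="b * of_int (n + 2)"])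
        show "c + a \<le> b * of_int (n + 2) - b * of_int (n - K)" using c0 ab by (simp add: algebra_simps)
        fix n' assume "b * of_int (n - K) < b * of_int n'" "b * of_int n' < b * of_int (n + 2)"
        hence "n - K < n'" "n' < n + 2" using iff by blast+
        thus "x n' \<noteq> 1" using zero h by (cases "n' = n + 1") auto
      qed
    qed
    have lo: "x (n - K) = 1"
    proof (rule ccontr)
      assume h: "x (n - K) \<noteq> 1"
      show False
      proof (rule window_contra2[OF xB rows ab(1), where \<alpha>="b * of_int (n - K - 1)" and \<beta>="b * of_int (n + 1)"])
        show "c + a \<le> b * of_int (n + 1) - b * of_int (n - K - 1)" using c0 ab by (simp add: algebra_simps)
        fix n' assume "b * of_int (n - K - 1) < b * of_int n'" "b * of_int n' < b * of_int (n + 1)"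
        hence "n - K - 1 < n'" "n' < n + 1" using iff by blast+
        thus "x n' \<noteq> 1" using zero h by (cases "n' = n - K") auto
      qed
    qed
    define t' where "t' = t1 + b * of_int (n - K)"
    have t'S: "t' \<in> Sabc a b c" unfolding t'_def by (rule S_shift_b[OF xB rows lo])
    have t'r: "t' = r - of_int K * b" by (simp add: t'_def r_def algebra_simps)
    define i0 where "i0 = \<lfloor>t' / a\<rfloor>"
    define y where "y = t' - a * of_int i0"
    have "of_int i0 \<le> t' / a" "t' / a < of_int i0 + 1" unfolding i0_def by linarith+
    hence "a * of_int i0 \<le> t'" "t' < a * of_int i0 + a"
      using ab(1) by (auto simp: field_simps)
    hence y0: "0 \<le> y" "y < a" unfolding y_def by linarith+
    have "y < c0 + a - b"
    proof (rule ccontr)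
      assume yd: "\<not> y < c0 + a - b"
      show False
      proof (rule window_contra[OF xB rows, of "i0 + 1"])
        fix n' assume A: "a * of_int (i0 + 1) - t1 \<le> b * of_int n'"
          "b * of_int n' < a * of_int (i0 + 1) - t1 + c"
        have eq: "a * of_int (i0 + 1) - t1 = b * of_int (n - K) + a - y"
          by (simp add: y_def t'_def algebra_simps)
        have "b * of_int (n - K) < b * of_int n'" using A(1) eq y0 by linarith
        moreover have "b * of_int n' < b * of_int (n + 1)"
        proof -
          have "b * of_int (n + 1) = b * of_int (n - K) + (b - c0) + c"
            using c0 by (simp add: algebra_simps)
          thus ?thesis using A(2) eq yd by linarith
        qed
        ultimately have "n - K < n'" "n' < n + 1" using iff by blast+
        thus "x n' \<noteq> 1" using zero by auto
      qed
    qed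
    hence "\<exists>j::int. 0 \<le> r - of_int K * b - a * of_int j \<and> r - of_int K * b - a * of_int j < c0 + a - b"
      using y0 by (intro exI[of _ i0]) (simp add: y_def t'r)
    thus ?thesis using t'S t'r unfolding PP_def rdef by auto
  qed
qed



lemma floor_window:
  fixes t h :: real
  assumes "0 < h"
  shows "(0 \<le> t - of_int z * h \<and> t - of_int z * h < of_int k * h) \<longleftrightarrow> (z \<le> \<lfloor>t/h\<rfloor> \<and> \<lfloor>t/h\<rfloor> < z + k)"
proof -
  have "0 \<le> t - of_int z * h \<longleftrightarrow> of_int z \<le> t / h" using assms by (simp add: field_simps)
  moreover have "t - of_int z * h < of_int k * h \<longleftrightarrow> t / h < of_int (z + k)"
    using assms by (simp add: field_simps)
  ultimately show ?thesis by (simp add: le_floor_iff floor_less_iff)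
qed

lemma floor_shift:
  fixes r h :: real
  assumes "0 < h" shows "\<lfloor>(r - of_int k * (of_int q * h)) / h\<rfloor> = \<lfloor>r / h\<rfloor> - k * q"
proof -
  have "(r - of_int k * (of_int q * h)) / h = r / h - of_int (k * q)" using assms by (simp add: field_simps)
  thus ?thesis by (metis floor_diff_of_int)
qed

lemma cell_S:
  assumes h: "0 < h" and ab: "a = of_int p * h" "b = of_int q * h" "c = of_int kc * h"
    and fl: "\<lfloor>t/h\<rfloor> = \<lfloor>t'/h\<rfloor>"
  shows "t \<in> Sabc a b c \<longleftrightarrow> t' \<in> Sabc a b c"
proof -
  have "Mentry a b c t m n = Mentry a b c t' m n" for m n
  proof -
    have e: "\<And>s. s - a * of_int m + b * of_int n = s - of_int (p * m - q * n) * h"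
      using ab by (simp add: algebra_simps)
    have "(0 \<le> t - of_int (p * m - q * n) * h \<and> t - of_int (p * m - q * n) * h < of_int kc * h) \<longleftrightarrow>
          (0 \<le> t' - of_int (p * m - q * n) * h \<and> t' - of_int (p * m - q * n) * h < of_int kc * h)"
      unfolding floor_window[OF h] fl ..
    thus ?thesis unfolding Mentry_def indicator_def e ab(3) by simp
  qed
  hence "Mentry a b c t = Mentry a b c t'" by (intro ext)
  thus ?thesis by (simp add: Sabc_def Mmult_def)
qed

lemma cell_Q:
  fixes a d h y y' :: real
  assumes h: "0 < h" and ab: "a = of_int p * h" "d = of_int D * h"
    and fl: "\<lfloor>y/h\<rfloor> = \<lfloor>y'/h\<rfloor>"
  shows "(\<exists>j::int. 0 \<le> y - a * of_int j \<and> y - a * of_int j < d) \<longleftrightarrow>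
         (\<exists>j::int. 0 \<le> y' - a * of_int j \<and> y' - a * of_int j < d)"
proof -
  have e: "\<And>s j. s - a * of_int j = s - of_int (p * j) * h" using ab by (simp add: algebra_simps)
  show ?thesis unfolding e ab(2) floor_window[OF h] fl ..
qed

lemma PP_cell:
  assumes h: "0 < h" and ab: "a = of_int p * h" "b = of_int q * h" "c = of_int kc * h" "d = of_int D * h"
    and fl: "\<lfloor>r/h\<rfloor> = \<lfloor>r'/h\<rfloor>" and P: "PP a b c K d r"
  shows "PP a b c K d r'"
proof -
  have fk: "\<lfloor>(r - of_int k * b)/h\<rfloor> = \<lfloor>(r' - of_int k * b)/h\<rfloor>" for k
    unfolding ab(2) floor_shift[OF h] fl ..
  have S: "r - of_int k * b \<in> Sabc a b c \<longleftrightarrow> r' - of_int k * b \<in> Sabc a b c" for k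
    by (rule cell_S[OF h ab(1-3) fk])
  have Q: "(\<exists>j::int. 0 \<le> r - of_int K * b - a * of_int j \<and> r - of_int K * b - a * of_int j < d) \<longleftrightarrow>
         (\<exists>j::int. 0 \<le> r' - of_int K * b - a * of_int j \<and> r' - of_int K * b - a * of_int j < d)"
    by (rule cell_Q[OF h ab(1) ab(4) fk])
  show ?thesis using P unfolding PP_def S Q .
qed

lemma rational_case:
  assumes ab: "0 < a" "a < b" and c0: "c0 = c - of_int K * b" "c0 < a"
    and pq: "0 < p" "0 < q" "coprime p q" "a / b = of_int p / of_int q"
    and kc: "c = (b / of_int q) * of_int kc"
    and t0: "t0 \<in> Sabc a b c"
  shows "PP a b c K (c0 + a - b) r"
proof -
  define h where "h = b / of_int q"
  have h: "0 < h" using ab pq by (simp add: h_def)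
  have bq: "b = of_int q * h" using pq by (simp add: h_def)
  have ap: "a = of_int p * h"
  proof -
    have "a = b * (of_int p / of_int q)" using pq(4) ab by (simp add: field_simps)
    thus ?thesis by (simp add: h_def)
  qed
  have cc: "c = of_int kc * h" using kc by (simp add: h_def)
  have dd: "c0 + a - b = of_int (kc - K * q + p - q) * h"
    using c0(1) cc bq ap by (simp add: algebra_simps)
  obtain u v :: int where uv: "u * p + v * q = 1"
    using bezout_int[of p q] pq(3) by (auto simp: coprime_iff_gcd_eq_1)
  define j where "j = \<lfloor>r/h\<rfloor> - \<lfloor>t0/h\<rfloor>"
  define r0 where "r0 = t0 + a * of_int (j * u) + b * of_int (j * v)"
  have "r0 = t0 + of_int j * h * of_int (u * p + v * q)"
    by (simp add: r0_def ap bq algebra_simps)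
  hence "r0 = t0 + of_int j * h" using uv by simp
  hence "r0 / h = t0 / h + of_int j" using h by (simp add: field_simps)
  hence fl: "\<lfloor>r0/h\<rfloor> = \<lfloor>r/h\<rfloor>" by (simp add: j_def)
  have "PP a b c K (c0 + a - b) r0" unfolding r0_def by (rule coset_P[OF ab c0 t0])
  thus ?thesis by (rule PP_cell[OF h ap bq cc dd fl])
qed



lemma seq01_conv:
  fixes x :: "nat \<Rightarrow> int \<Rightarrow> real"
  assumes "\<And>k n. x k n \<in> {0,1}"
  obtains r l where "strict_mono r" "\<And>n. l n \<in> {0,1}" "\<And>n. \<forall>\<^sub>F k in sequentially. x (r k) n = l n"
proof -
  define B where "B = PiE UNIV (\<lambda>_::int. {0::real,1})"
  have "compactin (product_topology (\<lambda>_. euclidean) UNIV) B"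
    unfolding B_def by (subst compactin_PiE) auto
  hence cB: "compact B" by (simp add: euclidean_product_topology)
  have xB: "\<And>k. x k \<in> B" using assms by (auto simp: B_def)
  obtain l r where lB: "l \<in> B" and r: "strict_mono r" and lim: "(x \<circ> r) \<longlonglongrightarrow> l"
    using compact_imp_seq_compact[OF cB] xB unfolding seq_compact_def by metis
  have ev: "\<forall>\<^sub>F k in sequentially. x (r k) n = l n" for n
  proof -
    have "((\<lambda>k. (x \<circ> r) k n) \<longlonglongrightarrow> l n)"
      using continuous_on_tendsto_compose[OF continuous_on_product_coordinates lim] by simp
    hence H: "\<forall>e>0. \<forall>\<^sub>F k in sequentially. dist (x (r k) n) (l n) < e"
      by (simp add: tendsto_iff)
    have "(1/2::real) > 0" by simp
    from H[rule_format, OF this] have "\<forall>\<^sub>F k in sequentially. dist (x (r k) n) (l n) < 1/2" .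
    thus ?thesis
    proof (rule eventually_mono)
      fix k assume "dist (x (r k) n) (l n) < 1/2"
      moreover have "x (r k) n \<in> {0,1}" "l n \<in> {0,1}" using assms lB by (auto simp: B_def)
      ultimately show "x (r k) n = l n" by (auto simp: dist_real_def)
    qed
  qed
  show ?thesis using that[OF r _ ev] lB by (auto simp: B_def)
qed

lemma Mentry_right:
  assumes pos: "\<And>k. 0 < s k" and small: "\<And>e. 0 < e \<Longrightarrow> \<forall>\<^sub>F k in sequentially. s k < e"
  shows "\<forall>\<^sub>F k in sequentially. Mentry a b c (t + s k) m n = Mentry a b c t m n"
proof -
  define y where "y = t - a * of_int m + b * of_int n"
  have E: "\<And>u. Mentry a b c (t + u) m n = indicator {0..<c} (y + u)"
    by (simp add: Mentry_def y_def algebra_simps)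
  have E0: "Mentry a b c t m n = indicator {0..<c} y" using E[of 0] by simp
  consider "0 \<le> y \<and> y < c" | "y < 0" | "c \<le> y" by linarith
  thus ?thesis
  proof cases
    case 1
    have "\<forall>\<^sub>F k in sequentially. s k < c - y" using small[of "c - y"] 1 by simp
    thus ?thesis
    proof (rule eventually_mono)
      fix k assume "s k < c - y" thus "Mentry a b c (t + s k) m n = Mentry a b c t m n"
        using pos[of k] 1 by (simp add: E E0 indicator_def)
    qed
  next
    case 2
    have "\<forall>\<^sub>F k in sequentially. s k < - y" using small[of "- y"] 2 by simp
    thus ?thesis
    proof (rule eventually_mono)
      fix k assume "s k < - y" thus "Mentry a b c (t + s k) m n = Mentry a b c t m n"
        using pos[of k] 2 by (simp add: E E0 indicator_def)
    qed
  next
    case 3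
    have "Mentry a b c (t + s k) m n = Mentry a b c t m n" for k
      using 3 pos[of k] by (simp add: E E0 indicator_def)
    thus ?thesis by simp
  qed
qed



lemma rc_S:
  assumes ab: "0 < b" and H: "\<And>e. 0 < e \<Longrightarrow> \<exists>t'\<in>Sabc a b c. t < t' \<and> t' < t + e"
  shows "t \<in> Sabc a b c"
proof -
  have "\<forall>k::nat. \<exists>t'. t' \<in> Sabc a b c \<and> t < t' \<and> t' < t + 1 / (real k + 1)"
  proof
    fix k :: nat
    have "0 < 1 / (real k + 1)" by simp
    from H[OF this] show "\<exists>t'. t' \<in> Sabc a b c \<and> t < t' \<and> t' < t + 1 / (real k + 1)" by blast
  qed
  from choice[OF this] obtain T where T0: "\<forall>k. T k \<in> Sabc a b c \<and> t < T k \<and> T k < t + 1 / (real k + 1)"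
    by blast
  hence T: "\<And>k. T k \<in> Sabc a b c" "\<And>k. t < T k" "\<And>k. T k < t + 1 / (real k + 1)" by auto
  have "\<forall>k. \<exists>x. x \<in> B0 \<and> (\<forall>m. Mmult a b c (T k) x m = 1)" using T(1) unfolding Sabc_def by blast
  from choice[OF this] obtain X where X0: "\<forall>k. X k \<in> B0 \<and> (\<forall>m. Mmult a b c (T k) (X k) m = 1)" by blast
  hence X: "\<And>k. X k \<in> B0" "\<And>k m. Mmult a b c (T k) (X k) m = 1" by auto
  have X01: "\<And>k n. X k n \<in> {0,1}" using X(1) by (auto simp: B0_def)
  obtain r l where r: "strict_mono r" and l01: "\<And>n. l n \<in> {0,1}"
    and conv: "\<And>n. \<forall>\<^sub>F k in sequentially. X (r k) n = l n"
    using seq01_conv[of X] X01 by blast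
  define s where "s k = T (r k) - t" for k
  have spos: "\<And>k. 0 < s k" using T(2) by (simp add: s_def)
  have ssmall: "\<forall>\<^sub>F k in sequentially. s k < e" if e: "0 < e" for e
  proof -
    obtain N where N: "inverse (real (Suc N)) < e" using reals_Archimedean[OF e] by blast
    show ?thesis unfolding eventually_sequentially
    proof (intro exI allI impI)
      fix k assume "N \<le> k"
      hence "N \<le> r k" using seq_suble[OF r] le_trans by blast
      hence "1 / (real (r k) + 1) \<le> inverse (real (Suc N))"
        by (simp add: field_simps)
      thus "s k < e" using T(3)[of "r k"] N by (simp add: s_def)
    qed
  qed
  have l0: "l 0 = 1"
  proof -
    from conv[of 0] obtain N where "\<forall>k\<ge>N. X (r k) 0 = l 0" unfolding eventually_sequentially by blast
    hence "X (r N) 0 = l 0" by simp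
    then obtain k where "X (r k) 0 = l 0" by blast
    thus ?thesis using X(1) by (auto simp: B0_def)
  qed
  have lB: "l \<in> B0" using l01 l0 by (simp add: B0_def)
  have row: "Mmult a b c t l m = 1" for m
  proof -
    define W where "W = {n::int. a * of_int m - t - 1 \<le> b * of_int n \<and> b * of_int n \<le> a * of_int m - t + c}"
    have "W \<subseteq> {\<lfloor>(a * of_int m - t - 1) / b\<rfloor> .. \<lceil>(a * of_int m - t + c) / b\<rceil>}"
    proof
      fix n assume "n \<in> W"
      hence "a * of_int m - t - 1 \<le> of_int n * b" "of_int n * b \<le> a * of_int m - t + c"
        by (simp_all add: W_def mult.commute)
      hence "(a * of_int m - t - 1) / b \<le> of_int n" "of_int n \<le> (a * of_int m - t + c) / b"
        using ab by (simp_all add: pos_divide_le_eq pos_le_divide_eq)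
      hence "\<lfloor>(a * of_int m - t - 1) / b\<rfloor> \<le> n" "n \<le> \<lceil>(a * of_int m - t + c) / b\<rceil>"
        by (metis floor_mono floor_of_int, metis ceiling_mono ceiling_of_int)
      thus "n \<in> {\<lfloor>(a * of_int m - t - 1) / b\<rfloor> .. \<lceil>(a * of_int m - t + c) / b\<rceil>}"
        by simp
    qed
    hence fW: "finite W" by (rule finite_subset) simp
    have onW: "Mmult a b c (t + u) x m = (\<Sum>n\<in>W. Mentry a b c (t + u) m n * x n)"
      if u: "0 \<le> u" "u < 1" for u x
      unfolding Mmult_def
    proof (rule sum.mono_neutral_left[OF fW])
      show "{n. Mentry a b c (t + u) m n \<noteq> 0} \<subseteq> W"
        using u by (auto simp: Mentry_ne0 W_def)
    qed auto
    have "\<forall>\<^sub>F k in sequentially. s k < 1" by (rule ssmall) simp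
    moreover have "\<forall>\<^sub>F k in sequentially. \<forall>n\<in>W. Mentry a b c (t + s k) m n = Mentry a b c t m n \<and> X (r k) n = l n"
    proof (rule eventually_ball_finite[OF fW], rule ballI)
      fix n assume "n \<in> W"
      show "\<forall>\<^sub>F k in sequentially. Mentry a b c (t + s k) m n = Mentry a b c t m n \<and> X (r k) n = l n"
        by (rule eventually_conj[OF Mentry_right[OF spos ssmall] conv])
    qed
    ultimately have "\<forall>\<^sub>F k in sequentially. s k < 1 \<and> (\<forall>n\<in>W. Mentry a b c (t + s k) m n = Mentry a b c t m n \<and> X (r k) n = l n)"
      by (rule eventually_conj)
    then obtain k where k: "s k < 1" "\<forall>n\<in>W. Mentry a b c (t + s k) m n = Mentry a b c t m n \<and> X (r k) n = l n"
      using eventually_sequentially by fastforce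
    have "Mmult a b c t l m = (\<Sum>n\<in>W. Mentry a b c t m n * l n)" using onW[of 0 l] by simp
    also have "\<dots> = (\<Sum>n\<in>W. Mentry a b c (t + s k) m n * X (r k) n)"
      using k(2) by (intro sum.cong) auto
    also have "\<dots> = Mmult a b c (t + s k) (X (r k)) m" using onW[of "s k" "X (r k)"] k(1) spos[of k] by simp
    also have "t + s k = T (r k)" by (simp add: s_def)
    finally show ?thesis using X(2) by simp
  qed
  show ?thesis using lB row by (auto simp: Sabc_def)
qed



lemma dense_coset:
  fixes a b e y :: real
  assumes b: "0 < b" and irr: "a / b \<notin> \<rat>" and e: "0 < e"
  shows "\<exists>i n::int. y < a * of_int i + b * of_int n \<and> a * of_int i + b * of_int n < y + e"
proof -
  have e2: "0 < e / (2 * b)" using b e by simp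
  obtain h k :: int where "k > 0" and hk: "\<bar>of_int k * (a / b) - of_int h - (y + e/2) / b\<bar> < e / (2 * b)"
    using sequence_of_fractional_parts_is_dense[OF irr e2, where \<alpha>="(y + e/2) / b"] by blast
  have "b * (of_int k * (a / b) - of_int h - (y + e/2) / b) = a * of_int k + b * of_int (- h) - y - e/2"
    using b by (simp add: field_simps)
  moreover have "\<bar>b * (of_int k * (a / b) - of_int h - (y + e/2) / b)\<bar> < e / 2"
  proof -
    have "\<bar>b * (of_int k * (a / b) - of_int h - (y + e/2) / b)\<bar> = b * \<bar>of_int k * (a / b) - of_int h - (y + e/2) / b\<bar>"
      using b by (simp add: abs_mult)
    also have "\<dots> < b * (e / (2 * b))" using hk b by (intro mult_strict_left_mono) auto
    also have "\<dots> = e / 2" using b by simp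
    finally show ?thesis .
  qed
  ultimately have "\<bar>a * of_int k + b * of_int (- h) - y - e/2\<bar> < e / 2" by simp
  hence "y < a * of_int k + b * of_int (- h) \<and> a * of_int k + b * of_int (- h) < y + e" by linarith
  thus ?thesis by blast
qed

lemma rc_Q:
  fixes a d y :: real
  assumes a: "0 < a"
    and H: "\<And>e. 0 < e \<Longrightarrow> \<exists>y'. y < y' \<and> y' < y + e \<and> (\<exists>j::int. 0 \<le> y' - a * of_int j \<and> y' - a * of_int j < d)"
  shows "\<exists>j::int. 0 \<le> y - a * of_int j \<and> y - a * of_int j < d"
proof -
  define i0 where "i0 = \<lfloor>y / a\<rfloor>"
  define z where "z = y - a * of_int i0"
  have "of_int i0 \<le> y / a" "y / a < of_int i0 + 1" unfolding i0_def by linarith+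
  hence "a * of_int i0 \<le> y" "y < a * of_int i0 + a"
    using a by (auto simp: field_simps)
  hence z: "0 \<le> z" "z < a" unfolding z_def by linarith+
  show ?thesis
  proof (cases "z < d")
    case True thus ?thesis using z by (intro exI[of _ i0]) (simp add: z_def)
  next
    case False
    obtain y' j where y': "y < y'" "y' < y + (a - z)" "0 \<le> y' - a * of_int j" "y' - a * of_int j < d"
      using H[of "a - z"] z by auto
    have "a * of_int i0 < a * of_int j" using y' False unfolding z_def by linarith
    hence "i0 < j" using a by simp
    moreover have "a * of_int j < a * of_int (i0 + 1)" using y' unfolding z_def by (simp add: algebra_simps)
    hence "j < i0 + 1" using a by simp
    ultimately show ?thesis by simp
  qed
qed

lemma irrational_case:
  assumes ab: "0 < a" "a < b" and c0: "c0 = c - of_int K * b" "c0 < a"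
    and irr: "a / b \<notin> \<rat>" and t0: "t0 \<in> Sabc a b c" and Kpos: "0 \<le> K"
  shows "PP a b c K (c0 + a - b) r"
proof (rule ccontr)
  assume nP: "\<not> PP a b c K (c0 + a - b) r"
  define d where "d = c0 + a - b"
  define Q where "Q y \<longleftrightarrow> (\<exists>j::int. 0 \<le> y - a * of_int j \<and> y - a * of_int j < d)" for y
  define A where "A k y \<longleftrightarrow> (if k < K then y \<in> Sabc a b c else y \<in> Sabc a b c \<and> Q y)" for k :: int and y
  have bpos: "0 < b" using ab by simp
  have ev: "\<forall>k\<in>{0..K}. \<forall>\<^sub>F y in at_right r. \<not> A k (y - of_int k * b)"
  proof
    fix k assume k: "k \<in> {0..K}"
    have notA: "\<not> A k (r - of_int k * b)"
      using nP k unfolding PP_def A_def Q_def d_def by (auto split: if_splits)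
    show "\<forall>\<^sub>F y in at_right r. \<not> A k (y - of_int k * b)"
    proof (rule ccontr)
      assume "\<not> (\<forall>\<^sub>F y in at_right r. \<not> A k (y - of_int k * b))"
      hence freq: "\<exists>y. r < y \<and> y < r + e \<and> A k (y - of_int k * b)" if "0 < e" for e
        using that unfolding eventually_at_right_field by (metis less_add_same_cancel1)
      have S: "r - of_int k * b \<in> Sabc a b c"
      proof (rule rc_S[OF bpos])
        fix e :: real assume "0 < e"
        then obtain y where "r < y" "y < r + e" "A k (y - of_int k * b)" using freq by blast
        thus "\<exists>t'\<in>Sabc a b c. r - of_int k * b < t' \<and> t' < r - of_int k * b + e"
          by (intro bexI[of _ "y - of_int k * b"]) (auto simp: A_def split: if_splits)
      qed
      show False
      proof (cases "k < K")
        case True thus False using S notA by (simp add: A_def)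
      next
        case False
        have "Q (r - of_int k * b)" unfolding Q_def
        proof (rule rc_Q[OF ab(1)])
          fix e :: real assume "0 < e"
          then obtain y where "r < y" "y < r + e" "A k (y - of_int k * b)" using freq by blast
          thus "\<exists>y'. r - of_int k * b < y' \<and> y' < r - of_int k * b + e \<and>
                 (\<exists>j::int. 0 \<le> y' - a * of_int j \<and> y' - a * of_int j < d)"
            using False by (intro exI[of _ "y - of_int k * b"]) (auto simp: A_def Q_def)
        qed
        thus False using S notA False by (simp add: A_def)
      qed
    qed
  qed
  have "\<forall>\<^sub>F y in at_right r. \<forall>k\<in>{0..K}. \<not> A k (y - of_int k * b)"
    by (rule eventually_ball_finite) (use ev in auto)
  then obtain \<beta> where \<beta>: "\<beta> > r" "\<And>y. r < y \<Longrightarrow> y < \<beta> \<Longrightarrow> \<forall>k\<in>{0..K}. \<not> A k (y - of_int k * b)"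
    unfolding eventually_at_right_field by blast
  obtain i n :: int where "r - t0 < a * of_int i + b * of_int n" "a * of_int i + b * of_int n < r - t0 + (\<beta> - r)"
    using dense_coset[OF bpos irr, of "\<beta> - r" "r - t0"] \<beta>(1) by auto
  hence r': "r < t0 + a * of_int i + b * of_int n" "t0 + a * of_int i + b * of_int n < \<beta>" by linarith+
  have P': "PP a b c K (c0 + a - b) (t0 + a * of_int i + b * of_int n)"
    by (rule coset_P[OF ab c0 t0])
  have notA': "\<forall>k\<in>{0..K}. \<not> A k (t0 + a * of_int i + b * of_int n - of_int k * b)"
    using \<beta>(2)[OF r'] .
  from P' show False
    unfolding PP_def
  proof
    assume "\<exists>k\<in>{0..<K}. t0 + a * of_int i + b * of_int n - of_int k * b \<in> Sabc a b c"
    then obtain k where k: "k \<in> {0..<K}" "t0 + a * of_int i + b * of_int n - of_int k * b \<in> Sabc a b c" by blast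
    hence "k \<in> {0..K}" by auto
    from notA'[rule_format, OF this] show False using k by (auto simp: A_def)
  next
    assume h: "t0 + a * of_int i + b * of_int n - of_int K * b \<in> Sabc a b c \<and>
      (\<exists>j::int. 0 \<le> t0 + a * of_int i + b * of_int n - of_int K * b - a * of_int j \<and>
         t0 + a * of_int i + b * of_int n - of_int K * b - a * of_int j < c0 + a - b)"
    have K0: "K \<in> {0..K}" using Kpos by simp
    show False using notA'[rule_format, OF K0] h by (auto simp: A_def Q_def d_def)
  qed
qed



theorem theorem5p3:
  fixes a b c c0 c1 :: real
  assumes "0 < a" "a < b" "b < c"
    and "\<lfloor>c / b\<rfloor> \<ge> 2"
    and "c0 = c - of_int \<lfloor>c / b\<rfloor> * b"
    and "c1 = c - c0 - of_int \<lfloor>(c - c0) / a\<rfloor> * a"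
    and "b - a < c0" "c0 < a"
    and "0 \<le> c1" "c1 \<le> 2 * a - b"
    and "Sabc a b c \<noteq> {}"
    and "a / b \<notin> \<rat> \<or>
         (\<exists>p q :: int. 0 < p \<and> 0 < q \<and> coprime p q \<and> a / b = of_int p / of_int q \<and>
            (\<exists>k :: int. c = (b / of_int q) * of_int k))"
  shows "(\<lambda>t. t + of_int \<lfloor>c / b\<rfloor> * b) `
           (Sabc a b c \<inter> {x + a * of_int k | x k. x \<in> {0..<c0 + a - b} \<and> k \<in> (UNIV :: int set)})
         \<union> (\<Union>k\<in>{0..<\<lfloor>c / b\<rfloor>}. (\<lambda>t. t + of_int k * b) ` Sabc a b c) = UNIV"
proof -
  define K where "K = \<lfloor>c / b\<rfloor>"
  obtain t0 where t0: "t0 \<in> Sabc a b c" using assms(11) by blast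
  have c0': "c0 = c - of_int K * b" using assms(5) by (simp add: K_def)
  have Kpos: "0 \<le> K" using assms(4) by (simp add: K_def)
  have P: "PP a b c K (c0 + a - b) r" for r
    using assms(12)
  proof
    assume "a / b \<notin> \<rat>"
    thus ?thesis by (rule irrational_case[OF assms(1,2) c0' assms(8) _ t0 Kpos])
  next
    assume "\<exists>p q :: int. 0 < p \<and> 0 < q \<and> coprime p q \<and> a / b = of_int p / of_int q \<and>
            (\<exists>k :: int. c = (b / of_int q) * of_int k)"
    then obtain p q kc :: int where pq: "0 < p" "0 < q" "coprime p q" "a / b = of_int p / of_int q"
      and kc: "c = (b / of_int q) * of_int kc" by blast
    show ?thesis by (rule rational_case[OF assms(1,2) c0' assms(8) pq kc t0])
  qed
  have "r \<in> (\<lambda>t. t + of_int K * b) `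
           (Sabc a b c \<inter> {x + a * of_int k | x k. x \<in> {0..<c0 + a - b} \<and> k \<in> (UNIV :: int set)})
         \<union> (\<Union>k\<in>{0..<K}. (\<lambda>t. t + of_int k * b) ` Sabc a b c)" for r
  proof -
    from P[of r] consider (A) k where "k \<in> {0..<K}" "r - of_int k * b \<in> Sabc a b c"
      | (B) j where "r - of_int K * b \<in> Sabc a b c" "0 \<le> r - of_int K * b - a * of_int j"
          "r - of_int K * b - a * of_int j < c0 + a - b"
      unfolding PP_def by blast
    thus ?thesis
    proof cases
      case A
      have "r \<in> (\<lambda>t. t + of_int k * b) ` Sabc a b c"
        by (rule rev_image_eqI[OF A(2)]) simp
      thus ?thesis using A(1) by blast
    next
      case B
      have "r - of_int K * b \<in> {x + a * of_int k | x k. x \<in> {0..<c0 + a - b} \<and> k \<in> (UNIV :: int set)}"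
        using B(2,3) by (intro CollectI exI[of _ "r - of_int K * b - a * of_int j"] exI[of _ j]) auto
      hence "r \<in> (\<lambda>t. t + of_int K * b) `
           (Sabc a b c \<inter> {x + a * of_int k | x k. x \<in> {0..<c0 + a - b} \<and> k \<in> (UNIV :: int set)})"
        using B(1) by (intro rev_image_eqI[of "r - of_int K * b"]) auto
      thus ?thesis by blast
    qed
  qed
  thus ?thesis unfolding K_def by blast
qed


end
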